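(* Let $K$ be a nonempty convex subset of a real Hausdorff locally convex topological vector space $X$, let $Y$ be a nonempty finite set and let $U\subseteq K$ be self-segment-dense in $K$. Let $f:K\times Y\to\mathbb R$ satisfy: (i) for every $y\in Y$ the map $x\mapsto f(x,y)$ is convex and lower semicontinuous on $U$; (ii) for all $y_1,y_2\in Y$ and $t\in[0,1]$ there exists $y_3\in Y$ with $f(x,y_3)\ge(1-t)f(x,y_1)+tf(x,y_2)$ for all $x\in U$; (iii) for every $y\in Y$ the infimum $\inf_{x\in U}f(x,y)$ is attained. Then $$\inf_{x\in U}\sup_{y\in Y}f(x,y)=\sup_{y\in Y}\min_{x\in U}f(x,y).$$
   Context: $[x,y]=\{x+t(y-x):t\in[0,1]\}$. Convex on $U$: $h((1-t)u+tv)\le(1-t)h(u)+th(v)$ whenever $u,v\in U$, $t\in[0,1]$, $(1-t)u+tv\in U$. Lower semicontinuous on $U$: for every $u\in U$ and net $(u_i)\subseteq U$ with $u_i\to u$, $\liminf h(u_i)\ge h(u)$. Self-segment-dense: for convex $V$ and $U\subseteq V$, $U$ is self-segment-dense in $V$ if $V\subseteq\operatorname{cl}U$ and for all $x,y\in U$, $[x,y]\cap U$ is dense in $[x,y]$. *)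

theory Defs
  imports "HOL-Analysis.Analysis"
begin

text \<open>The topology of the type 'a (class t2_space, hence Hausdorff) makes the real vector
space 'a a locally convex topological vector space.\<close>
definition locally_convex_tvs :: "'a::{real_vector,t2_space} itself \<Rightarrow> bool" where
  "locally_convex_tvs _ \<longleftrightarrow>
     continuous_on UNIV (\<lambda>p::'a \<times> 'a. fst p + snd p) \<and>
     continuous_on UNIV (\<lambda>p::real \<times> 'a. fst p *\<^sub>R snd p) \<and>
     (\<forall>W::'a set. open W \<and> 0 \<in> W \<longrightarrow> (\<exists>V. open V \<and> convex V \<and> 0 \<in> V \<and> V \<subseteq> W))"

definition convex_on_set :: "'a::real_vector set \<Rightarrow> ('a \<Rightarrow> real) \<Rightarrow> bool" where
  "convex_on_set U h \<longleftrightarrow>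
     (\<forall>u\<in>U. \<forall>v\<in>U. \<forall>t::real. 0 \<le> t \<and> t \<le> 1 \<and> (1 - t) *\<^sub>R u + t *\<^sub>R v \<in> U \<longrightarrow>
        h ((1 - t) *\<^sub>R u + t *\<^sub>R v) \<le> (1 - t) * h u + t * h v)"

text \<open>Lower semicontinuity on U (relative topology); the filter formulation is
equivalent to the net formulation.\<close>
definition lsc_on_set :: "'a::topological_space set \<Rightarrow> ('a \<Rightarrow> real) \<Rightarrow> bool" where
  "lsc_on_set U h \<longleftrightarrow>
     (\<forall>u\<in>U. \<forall>c. c < h u \<longrightarrow> eventually (\<lambda>v. c < h v) (at u within U))"

definition self_segment_dense :: "'a::{real_vector,topological_space} set \<Rightarrow> 'a set \<Rightarrow> bool" where
  "self_segment_dense U V \<longleftrightarrow>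
     U \<subseteq> V \<and> V \<subseteq> closure U \<and>
     (\<forall>x\<in>U. \<forall>y\<in>U. closed_segment x y \<subseteq> closure (closed_segment x y \<inter> U))"

end

theory Submission
  imports Defs
begin


lemma key_pair:
  fixes g h :: "'a \<Rightarrow> real"
  assumes AC2: "\<forall>u\<in>V. \<forall>v\<in>V. \<forall>t::real. 0 \<le> t \<and> t \<le> 1 \<longrightarrow> (\<forall>e>0. \<exists>w\<in>V.
      g w \<le> (1-t)*g u + t*g v + e \<and> h w \<le> (1-t)*h u + t*h v + e)"
    and pos: "\<forall>x\<in>V. c < g x \<or> c < h x"
    and x1: "x1 \<in> V" "g x1 \<le> c" and x2: "x2 \<in> V" "h x2 \<le> c"
  shows "(c - g x1)/(h x1 - g x1) \<le> (g x2 - c)/(g x2 - h x2)"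
proof (rule ccontr)
  define G1 where "G1 = g x1 - c"
  define G2 where "G2 = g x2 - c"
  define H1 where "H1 = h x1 - c"
  define H2 where "H2 = h x2 - c"
  have "c < h x1" using pos x1 by force
  hence H1p: "H1 > 0" and G1n: "G1 \<le> 0" using x1 by (auto simp: G1_def H1_def)
  have "c < g x2" using pos x2 by force
  hence G2p: "G2 > 0" and H2n: "H2 \<le> 0" using x2 by (auto simp: G2_def H2_def)
  assume "\<not> ?thesis"
  hence "(-G1)/(H1 - G1) > G2/(G2 - H2)" by (simp add: G1_def G2_def H1_def H2_def)
  hence "(-G1) * (G2 - H2) > G2 * (H1 - G1)" using H1p G1n G2p H2n
    by (simp add: divide_simps)
  hence lt: "H1 * G2 < G1 * H2" by (simp add: algebra_simps)
  define a where "a = H1 / (H1 - H2)"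
  define b where "b = -G1 / (G2 - G1)"
  have ab: "a < b" unfolding a_def b_def using H1p G1n G2p H2n lt
    by (simp add: divide_simps algebra_simps)
  define s where "s = (a + b) / 2"
  have a0: "0 < a" "a \<le> 1" unfolding a_def using H1p H2n by (auto simp: divide_simps)
  have b1: "0 \<le> b" "b < 1" unfolding b_def using G2p G1n by (auto simp: divide_simps)
  have s01: "0 \<le> s" "s \<le> 1" using a0 b1 ab by (auto simp: s_def)
  have "s < b" "a < s" using ab by (auto simp: s_def)
  have gneg: "(1-s)*G1 + s*G2 < 0"
  proof -
    have "s * (G2 - G1) < -G1" using \<open>s < b\<close> G2p G1n unfolding b_def by (simp add: divide_simps)
    thus ?thesis by (simp add: algebra_simps)
  qed
  have hneg: "(1-s)*H1 + s*H2 < 0"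
  proof -
    have "H1 < s * (H1 - H2)" using \<open>a < s\<close> H1p H2n unfolding a_def by (simp add: divide_simps)
    thus ?thesis by (simp add: algebra_simps)
  qed
  define PG where "PG = (1-s)*G1 + s*G2"
  define PH where "PH = (1-s)*H1 + s*H2"
  define e where "e = min (-((1-s)*G1 + s*G2)) (-((1-s)*H1 + s*H2)) / 2"
  have e0: "e > 0" using gneg hneg by (simp add: e_def)
  have e1: "e \<le> -((1-s)*G1 + s*G2)/2" "e \<le> -((1-s)*H1 + s*H2)/2" by (auto simp: e_def)
  obtain w where w: "w \<in> V" "g w \<le> (1-s)*g x1 + s*g x2 + e" "h w \<le> (1-s)*h x1 + s*h x2 + e"
    using AC2 x1(1) x2(1) s01 e0 by blast
  have "g w \<le> c + ((1-s)*G1 + s*G2) + e" using w(2) by (simp add: G1_def G2_def algebra_simps)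
  hence "g w < c" using gneg e1 unfolding PG_def[symmetric] by linarith
  moreover have "h w \<le> c + ((1-s)*H1 + s*H2) + e" using w(3) by (simp add: H1_def H2_def algebra_simps)
  hence "h w < c" using hneg e1 unfolding PH_def[symmetric] by linarith
  ultimately show False using pos w(1) by force
qed

lemma two_fun:
  fixes g h :: "'a \<Rightarrow> real"
  assumes AC2: "\<forall>u\<in>V. \<forall>v\<in>V. \<forall>t::real. 0 \<le> t \<and> t \<le> 1 \<longrightarrow> (\<forall>e>0. \<exists>w\<in>V.
      g w \<le> (1-t)*g u + t*g v + e \<and> h w \<le> (1-t)*h u + t*h v + e)"
    and pos: "\<forall>x\<in>V. c < g x \<or> c < h x"
  shows "\<exists>t. 0 \<le> t \<and> t \<le> 1 \<and> (\<forall>x\<in>V. c \<le> (1-t)*g x + t*h x)"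
proof -
  define A where "A = (\<lambda>x. (c - g x)/(h x - g x)) ` {x\<in>V. g x \<le> c}"
  define B where "B = (\<lambda>x. (g x - c)/(g x - h x)) ` {x\<in>V. h x \<le> c}"
  have Aprop: "0 \<le> a \<and> a \<le> 1" if aA: "a \<in> A" for a
  proof -
    obtain x where "x \<in> V" "g x \<le> c" "a = (c - g x)/(h x - g x)" using aA unfolding A_def by blast
    moreover have "c < h x" using pos \<open>x\<in>V\<close> \<open>g x \<le> c\<close> by force
    ultimately have "0 \<le> (c - g x)/(h x - g x)" "(c - g x)/(h x - g x) \<le> 1"
      by (auto simp: divide_simps)
    thus ?thesis using \<open>a = _\<close> by simp
  qed
  have Bprop: "0 \<le> b \<and> b \<le> 1" if bB: "b \<in> B" for b
  proof -
    obtain x where "x \<in> V" "h x \<le> c" "b = (g x - c)/(g x - h x)" using bB unfolding B_def by blast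
    moreover have "c < g x" using pos \<open>x\<in>V\<close> \<open>h x \<le> c\<close> by force
    ultimately have "0 \<le> (g x - c)/(g x - h x)" "(g x - c)/(g x - h x) \<le> 1"
      by (auto simp: divide_simps)
    thus ?thesis using \<open>b = _\<close> by simp
  qed
  have AB: "a \<le> b" if "a \<in> A" "b \<in> B" for a b
    using that key_pair[OF AC2 pos] unfolding A_def B_def by auto
  obtain t where t: "0 \<le> t" "t \<le> 1" "\<forall>a\<in>A. a \<le> t" "\<forall>b\<in>B. t \<le> b"
  proof (cases "A = {}")
    case True
    thus ?thesis using that[of 0] Bprop by auto
  next
    case False
    have bdd: "bdd_above A" unfolding bdd_above_def using Aprop by blast
    show ?thesis
    proof (rule that[of "Sup A"])
      show "0 \<le> Sup A" using False Aprop bdd by (meson all_not_in_conv cSup_upper order_trans)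
      show "Sup A \<le> 1" using False Aprop by (meson cSup_least)
      show "\<forall>a\<in>A. a \<le> Sup A" using bdd by (simp add: cSup_upper)
      show "\<forall>b\<in>B. Sup A \<le> b" using False AB by (meson cSup_least)
    qed
  qed
  show ?thesis
  proof (intro exI conjI ballI)
    fix x assume x: "x \<in> V"
    show "c \<le> (1-t)*g x + t*h x"
    proof (cases "g x \<le> c")
      case True
      have hx: "c < h x" using pos x True by force
      have "(c - g x)/(h x - g x) \<le> t" using t(3) x True A_def by auto
      hence "c - g x \<le> t * (h x - g x)" using hx True by (simp add: divide_simps)
      thus ?thesis by (simp add: algebra_simps)
    next
      case False
      show ?thesis
      proof (cases "h x \<le> c")
        case True
        have "t \<le> (g x - c)/(g x - h x)" using t(4) x True B_def by auto
        hence "t * (g x - h x) \<le> g x - c" using False True by (simp add: divide_simps)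
        thus ?thesis by (simp add: algebra_simps)
      next
        case F2: False
        have "(1-t)*c \<le> (1-t)*g x" using False t by (intro mult_left_mono) auto
        moreover have "t*c \<le> t*h x" using F2 t by (intro mult_left_mono) auto
        ultimately show ?thesis by (simp add: algebra_simps)
      qed
    qed
  qed (use t in auto)
qed


definition acv :: "'a set \<Rightarrow> 'b set \<Rightarrow> ('a \<Rightarrow> 'b \<Rightarrow> real) \<Rightarrow> bool" where
  "acv V Y f \<longleftrightarrow> (\<forall>u\<in>V. \<forall>v\<in>V. \<forall>t::real. 0 \<le> t \<and> t \<le> 1 \<longrightarrow> (\<forall>e>0. \<exists>w\<in>V.
      \<forall>y\<in>Y. f w y \<le> (1-t)*f u y + t*f v y + e))"

lemma conv_le_max: "0 \<le> t \<Longrightarrow> t \<le> 1 \<Longrightarrow> (1-t)*a + t*b \<le> max a (b::real)"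
proof -
  assume t: "0 \<le> t" "t \<le> 1"
  have "(1-t)*a \<le> (1-t)*max a b" using t by (intro mult_left_mono) auto
  moreover have "t*b \<le> t*max a b" using t by (intro mult_left_mono) auto
  ultimately show ?thesis by (simp add: algebra_simps)
qed

lemma induct_main:
  fixes f :: "'a \<Rightarrow> 'b \<Rightarrow> real"
  assumes CL: "\<forall>y1\<in>Y. \<forall>y2\<in>Y. \<forall>t::real. 0 \<le> t \<and> t \<le> 1 \<longrightarrow>
               (\<exists>y3\<in>Y. \<forall>x\<in>U. f x y3 \<ge> (1 - t) * f x y1 + t * f x y2)"
    and Yne: "Y \<noteq> {}"
    and F: "finite F" "F \<subseteq> Y"
  shows "\<forall>V c d. V \<subseteq> U \<longrightarrow> acv V Y f \<longrightarrow> (\<forall>x\<in>V. \<exists>y\<in>F. c < f x y) \<longrightarrow> d < c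
           \<longrightarrow> (\<exists>y\<in>Y. \<forall>x\<in>V. d < f x y)"
  using F
proof (induction F rule: finite_induct)
  case empty
  then show ?case using Yne by auto
next
  case (insert z F)
  have zY: "z \<in> Y" using insert by auto
  show ?case
  proof (intro allI impI)
    fix V c d
    assume VU: "V \<subseteq> U" and ac: "acv V Y f" and hyp: "\<forall>x\<in>V. \<exists>y\<in>insert z F. c < f x y" and dc: "d < c"
    define d' where "d' = (c + d)/2"
    have d': "d < d'" "d' < c" using dc by (auto simp: d'_def)
    define V' where "V' = {x\<in>V. f x z < c}"
    have ac': "acv V' Y f" unfolding acv_def
    proof (intro ballI allI impI)
      fix u v and t e :: real
      assume u: "u \<in> V'" and v: "v \<in> V'" and t: "0 \<le> t \<and> t \<le> 1" and e: "(0::real) < e"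
      define e' where "e' = min e ((c - max (f u z) (f v z))/2)"
      have e'0: "e' > 0" using u v e by (auto simp: e'_def V'_def)
      obtain w where w: "w \<in> V" "\<forall>y\<in>Y. f w y \<le> (1-t)*f u y + t*f v y + e'"
        using ac u v t e'0 unfolding acv_def V'_def by blast
      have "f w z \<le> (1-t)*f u z + t*f v z + e'" using w zY by auto
      also have "\<dots> \<le> max (f u z) (f v z) + e'" using conv_le_max[of t "f u z" "f v z"] t by simp
      also have "\<dots> < c" using u v unfolding e'_def V'_def by (auto simp: max_def min_def field_simps split: if_splits)
      finally have "w \<in> V'" using w by (auto simp: V'_def)
      moreover have "\<forall>y\<in>Y. f w y \<le> (1-t)*f u y + t*f v y + e"
        using w(2) by (smt (verit) e'_def)
      ultimately show "\<exists>w\<in>V'. \<forall>y\<in>Y. f w y \<le> (1-t)*f u y + t*f v y + e" by blast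
    qed
    have hyp': "\<forall>x\<in>V'. \<exists>y\<in>F. c < f x y"
      using hyp unfolding V'_def by force
    obtain y' where y': "y' \<in> Y" "\<forall>x\<in>V'. d' < f x y'"
    proof -
      have "F \<subseteq> Y" "V' \<subseteq> U" using insert.prems VU by (auto simp: V'_def)
      thus ?thesis using insert.IH ac' hyp' d'(2) that by blast
    qed
    have pos: "\<forall>x\<in>V. d' < f x y' \<or> d' < f x z"
      using y'(2) d'(2) unfolding V'_def by force
    have AC2: "\<forall>u\<in>V. \<forall>v\<in>V. \<forall>t::real. 0 \<le> t \<and> t \<le> 1 \<longrightarrow> (\<forall>e>0. \<exists>w\<in>V.
      f w y' \<le> (1-t)*f u y' + t*f v y' + e \<and> f w z \<le> (1-t)*f u z + t*f v z + e)"
      using ac y'(1) zY unfolding acv_def by blast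
    obtain t where t: "0 \<le> t" "t \<le> 1" "\<forall>x\<in>V. d' \<le> (1-t)*f x y' + t*f x z"
      using two_fun[of V "\<lambda>x. f x y'" "\<lambda>x. f x z" d', OF AC2 pos] by blast
    obtain y3 where y3: "y3 \<in> Y" "\<forall>x\<in>U. f x y3 \<ge> (1 - t) * f x y' + t * f x z"
      using CL y'(1) zY t by blast
    show "\<exists>y\<in>Y. \<forall>x\<in>V. d < f x y"
    proof (intro bexI[OF _ y3(1)] ballI)
      fix x assume "x \<in> V"
      thus "d < f x y3" using t(3) y3(2) VU d'(1) by force
    qed
  qed
qed




lemma seg_dense_param:
  fixes U :: "'a::{real_vector,t2_space} set"
  assumes lctvs: "locally_convex_tvs TYPE('a)"
    and seg: "closed_segment u v \<subseteq> closure (closed_segment u v \<inter> U)"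
    and uv: "u \<noteq> v" and t: "0 \<le> t" "t \<le> 1"
  shows "t \<in> closure {s\<in>{0..1}. (1-s) *\<^sub>R u + s *\<^sub>R v \<in> U}"
proof -
  define \<phi> where "\<phi> = (\<lambda>s::real. (1-s) *\<^sub>R u + s *\<^sub>R v)"
  define S where "S = {s\<in>{0..1}. \<phi> s \<in> U}"
  have add: "continuous_on UNIV (\<lambda>p::'a \<times> 'a. fst p + snd p)"
    and sc: "continuous_on UNIV (\<lambda>p::real \<times> 'a. fst p *\<^sub>R snd p)"
    using lctvs unfolding locally_convex_tvs_def by auto
  have c1: "continuous_on UNIV (\<lambda>s::real. (1-s) *\<^sub>R u)"
    using continuous_on_compose2[OF sc, of UNIV "\<lambda>s::real. (1-s, u)"]
    by (simp add: continuous_intros)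
  have c2: "continuous_on UNIV (\<lambda>s::real. s *\<^sub>R v)"
    using continuous_on_compose2[OF sc, of UNIV "\<lambda>s::real. (s, v)"]
    by (simp add: continuous_intros)
  have c3: "continuous_on UNIV (\<lambda>s::real. ((1-s) *\<^sub>R u, s *\<^sub>R v))"
    using c1 c2 by (rule continuous_on_Pair)
  have cphi: "continuous_on UNIV \<phi>"
    using continuous_on_compose2[OF add c3] by (simp add: \<phi>_def)
  define T where "T = closure S"
  have TS: "T \<subseteq> {0..1}" unfolding T_def S_def
    by (rule closure_minimal) auto
  have cT: "compact T" using TS compact_Int_closed[of "{0..1::real}" T]
    by (simp add: T_def Int_absorb1)
  have clT: "closed (\<phi> ` T)"
    using compact_imp_closed compact_continuous_image[OF continuous_on_subset[OF cphi] cT] by blast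
  have "closed_segment u v \<inter> U \<subseteq> \<phi> ` T"
  proof
    fix p assume "p \<in> closed_segment u v \<inter> U"
    then obtain s where s: "0 \<le> s" "s \<le> 1" "p = \<phi> s" "p \<in> U"
      unfolding closed_segment_def \<phi>_def by auto
    hence "s \<in> S" by (auto simp: S_def)
    hence "s \<in> T" unfolding T_def using closure_subset by blast
    thus "p \<in> \<phi> ` T" using s by auto
  qed
  hence "closure (closed_segment u v \<inter> U) \<subseteq> \<phi> ` T" using clT by (rule closure_minimal)
  moreover have "\<phi> t \<in> closed_segment u v" unfolding closed_segment_def \<phi>_def using t by auto
  ultimately have "\<phi> t \<in> \<phi> ` T" using seg by (meson subsetD)
  then obtain s' where s': "s' \<in> T" "\<phi> s' = \<phi> t" by (metis imageE)
  have "(s' - t) *\<^sub>R (v - u) = 0" using s'(2) unfolding \<phi>_def by (simp add: algebra_simps)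
  hence "s' = t" using uv by simp
  thus ?thesis using s'(1) by (simp add: T_def S_def \<phi>_def)
qed



lemma acv_U:
  fixes K U :: "'a::{real_vector,t2_space} set"
    and Y :: "'b set"
    and f :: "'a \<Rightarrow> 'b \<Rightarrow> real"
  assumes lctvs: "locally_convex_tvs TYPE('a)"
    and Y: "finite Y"
    and U: "self_segment_dense U K"
    and i: "\<forall>y\<in>Y. convex_on_set U (\<lambda>x. f x y) \<and> lsc_on_set U (\<lambda>x. f x y)"
  shows "acv U Y f"
  unfolding acv_def
proof (intro ballI allI impI)
  fix u v and t e :: real
  assume u: "u \<in> U" and v: "v \<in> U" and t: "0 \<le> t \<and> t \<le> 1" and e: "0 < e"
  show "\<exists>w\<in>U. \<forall>y\<in>Y. f w y \<le> (1-t)*f u y + t*f v y + e"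
  proof (cases "u = v")
    case True
    thus ?thesis using u e by (intro bexI[of _ u]) (auto simp: algebra_simps)
  next
    case False
    have seg: "closed_segment u v \<subseteq> closure (closed_segment u v \<inter> U)"
      using U u v unfolding self_segment_dense_def by blast
    have tc: "t \<in> closure {s\<in>{0..1}. (1-s) *\<^sub>R u + s *\<^sub>R v \<in> U}"
      using seg_dense_param[OF lctvs seg False] t by auto
    define M where "M = (\<Sum>y\<in>Y. \<bar>f v y - f u y\<bar>)"
    have M0: "0 \<le> M" unfolding M_def by (simp add: sum_nonneg)
    define \<delta> where "\<delta> = e / (M + 1)"
    have d0: "\<delta> > 0" using M0 e by (simp add: \<delta>_def)
    obtain s where s: "0 \<le> s" "s \<le> 1" "(1-s) *\<^sub>R u + s *\<^sub>R v \<in> U" "dist s t < \<delta>"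
      using tc d0 unfolding closure_approachable by auto
    define w where "w = (1-s) *\<^sub>R u + s *\<^sub>R v"
    have dM: "\<delta> * M \<le> e" using M0 e by (simp add: \<delta>_def field_simps)
    show ?thesis
    proof (intro bexI[of _ w] ballI)
      show "w \<in> U" using s w_def by simp
      fix y assume y: "y \<in> Y"
      have cv: "convex_on_set U (\<lambda>x. f x y)" using i y by blast
      have "f w y \<le> (1-s)*f u y + s*f v y"
        using cv u v s(1,2,3) unfolding convex_on_set_def w_def by simp
      also have "\<dots> = (1-t)*f u y + t*f v y + (s-t)*(f v y - f u y)" by (simp add: algebra_simps)
      also have "(s-t)*(f v y - f u y) \<le> \<bar>s-t\<bar> * \<bar>f v y - f u y\<bar>"
        by (metis abs_ge_self abs_mult)
      also have "\<bar>s-t\<bar> * \<bar>f v y - f u y\<bar> \<le> \<delta> * M"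
      proof (rule mult_mono)
        show "\<bar>s-t\<bar> \<le> \<delta>" using s(4) by (simp add: dist_real_def)
        show "\<bar>f v y - f u y\<bar> \<le> M" unfolding M_def
          using member_le_sum[of y Y "\<lambda>y. \<bar>f v y - f u y\<bar>"] Y y by simp
      qed (use d0 in auto)
      finally show "f w y \<le> (1-t)*f u y + t*f v y + e" using dM by simp
    qed
  qed
qed



theorem mainTheorem14:
  fixes K U :: "'a::{real_vector,t2_space} set"
    and Y :: "'b set"
    and f :: "'a \<Rightarrow> 'b \<Rightarrow> real"
  assumes lctvs: "locally_convex_tvs TYPE('a)"
    and K: "convex K" "K \<noteq> {}"
    and Y: "finite Y" "Y \<noteq> {}"
    and U: "self_segment_dense U K"
    and i: "\<forall>y\<in>Y. convex_on_set U (\<lambda>x. f x y) \<and> lsc_on_set U (\<lambda>x. f x y)"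
    and ii: "\<forall>y1\<in>Y. \<forall>y2\<in>Y. \<forall>t::real. 0 \<le> t \<and> t \<le> 1 \<longrightarrow>
               (\<exists>y3\<in>Y. \<forall>x\<in>U. f x y3 \<ge> (1 - t) * f x y1 + t * f x y2)"
    and iii: "\<forall>y\<in>Y. \<exists>x0\<in>U. \<forall>x\<in>U. f x0 y \<le> f x y"
  shows "(INF x\<in>U. MAX y\<in>Y. f x y) = (MAX y\<in>Y. INF x\<in>U. f x y)"
proof -
  have Une: "U \<noteq> {}"
  proof
    assume "U = {}"
    hence "K \<subseteq> {}" using U by (simp add: self_segment_dense_def)
    thus False using K(2) by blast
  qed
  have ac: "acv U Y f" using acv_U[OF lctvs Y(1) U i] .
  have bddy: "bdd_below ((\<lambda>x. f x y) ` U)" if yY: "y \<in> Y" for y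
  proof -
    obtain x0 where x0: "x0 \<in> U" "\<forall>x\<in>U. f x0 y \<le> f x y" using bspec[OF iii yY] by (elim bexE)
    show ?thesis by (rule bdd_belowI2[where m="f x0 y"]) (use x0 in simp)
  qed
  have maxge: "f x y \<le> (MAX y\<in>Y. f x y)" if "y \<in> Y" for x y
    using Y that by (simp add: Max_ge)
  obtain y0 where y0: "y0 \<in> Y" using Y by blast
  have bddm: "bdd_below ((\<lambda>x. MAX y\<in>Y. f x y) ` U)"
  proof -
    obtain b where "\<forall>x\<in>U. b \<le> f x y0" using bddy[OF y0] unfolding bdd_below_def by auto
    hence "\<forall>x\<in>U. b \<le> (MAX y\<in>Y. f x y)" using maxge[OF y0] by (meson order_trans)
    thus ?thesis by (intro bdd_belowI2[where m=b]) simp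
  qed
  define \<alpha> where "\<alpha> = (INF x\<in>U. MAX y\<in>Y. f x y)"
  have le1: "(MAX y\<in>Y. INF x\<in>U. f x y) \<le> \<alpha>"
  proof -
    have "(INF x\<in>U. f x y) \<le> \<alpha>" if y: "y \<in> Y" for y
      unfolding \<alpha>_def
    proof (rule cINF_greatest[OF Une])
      fix x assume xU: "x \<in> U"
      have "(INF x\<in>U. f x y) \<le> f x y" by (rule cINF_lower[OF bddy[OF y] xU])
      also have "\<dots> \<le> (MAX y\<in>Y. f x y)" using maxge[OF y] .
      finally show "(INF x\<in>U. f x y) \<le> (MAX y\<in>Y. f x y)" .
    qed
    thus ?thesis using Y by (simp add: Max_le_iff)
  qed
  have le2: "\<alpha> \<le> (MAX y\<in>Y. INF x\<in>U. f x y)"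
  proof (rule dense_le)
    fix d assume d: "d < \<alpha>"
    define c where "c = (d + \<alpha>)/2"
    have dc: "d < c" "c < \<alpha>" using d by (auto simp: c_def)
    have hyp: "\<forall>x\<in>U. \<exists>y\<in>Y. c < f x y"
    proof
      fix x assume x: "x \<in> U"
      have "\<alpha> \<le> (MAX y\<in>Y. f x y)" unfolding \<alpha>_def by (rule cINF_lower[OF bddm x])
      moreover have "(MAX y\<in>Y. f x y) \<in> (\<lambda>y. f x y) ` Y"
        using Max_in[of "(\<lambda>y. f x y) ` Y"] Y by simp
      then obtain y where "y \<in> Y" "f x y = (MAX y\<in>Y. f x y)" by (metis imageE)
      ultimately show "\<exists>y\<in>Y. c < f x y" using dc by force
    qed
    obtain y where y: "y \<in> Y" "\<forall>x\<in>U. d < f x y"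
      using induct_main[OF ii Y(2) Y(1) order_refl, rule_format, OF order_refl ac, of c d] hyp dc(1) by blast
    have "d \<le> (INF x\<in>U. f x y)" using y(2) by (intro cINF_greatest[OF Une]) (simp add: less_imp_le)
    also have "\<dots> \<le> (MAX y\<in>Y. INF x\<in>U. f x y)" using Y y(1) by (simp add: Max_ge)
    finally show "d \<le> (MAX y\<in>Y. INF x\<in>U. f x y)" .
  qed
  show ?thesis using le1 le2 unfolding \<alpha>_def by linarith
qed


end
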